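(* Let $f_0,f_1$ be probability densities on $\mathbb{R}$, $w(y;u)=f_1(y)^u f_0(y)^{1-u}$ and $k(u)=\int w(y;u)\,dy$. Let $u,v\in[0,1]$ with $u+v<1$ be such that the densities $\bar g_0=w(\cdot;u)/k(u)$ and $\bar g_1=w(\cdot;1-v)/k(1-v)$ satisfy $D(\bar g_0,f_0)=\varepsilon_0$ and $D(\bar g_1,f_1)=\varepsilon_1$. Then, with $\mathcal{G}_j=\{g_j: D(g_j,f_j)\le\varepsilon_j\}$, $$\bar g_0=\arg\max_{g_0\in\mathcal{G}_0}\mathrm{E}_{g_0}\Big[\ln\frac{\bar g_1}{\bar g_0}(Y)\Big],\qquad \bar g_1=\arg\min_{g_1\in\mathcal{G}_1}\mathrm{E}_{g_1}\Big[\ln\frac{\bar g_1}{\bar g_0}(Y)\Big].$$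
   Context: $D(g,f)=\int\ln(g/f)\,g\,dy$ is the Kullback–Leibler divergence; $\mathcal{G}_j$ ranges over probability densities; $\mathrm{E}_{g}$ denotes expectation with $Y\sim g$. *)

theory Defs
  imports "HOL-Analysis.Analysis"
begin

definition is_density :: "(real \<Rightarrow> real) \<Rightarrow> bool" where
  "is_density g \<longleftrightarrow> g \<in> borel_measurable lborel \<and> (\<forall>y. 0 \<le> g y)
      \<and> integrable lborel g \<and> (\<integral>y. g y \<partial>lborel) = 1"

text \<open>Kullback-Leibler divergence D(g,f) = int ln(g/f) g dy, with values in [0,\<infinity>]:
  it is \<infinity> unless g is absolutely continuous w.r.t. f and the integrand is integrable
  (its negative part is always integrable for densities). Convention 0 ln 0 = 0.\<close>
definition KL :: "(real \<Rightarrow> real) \<Rightarrow> (real \<Rightarrow> real) \<Rightarrow> ereal" where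
  "KL g f = (if (AE y in lborel. f y = 0 \<longrightarrow> g y = 0)
                \<and> integrable lborel (\<lambda>y. g y * ln (g y / f y))
             then ereal (\<integral>y. g y * ln (g y / f y) \<partial>lborel) else \<infinity>)"

definition KL_ball :: "(real \<Rightarrow> real) \<Rightarrow> real \<Rightarrow> (real \<Rightarrow> real) set" where
  "KL_ball f eps = {g. is_density g \<and> KL g f \<le> ereal eps}"

text \<open>w(y;u) = f1(y)^u f0(y)^(1-u), with the convention 0^0 = 1 at the endpoints.\<close>
definition geo_w :: "(real \<Rightarrow> real) \<Rightarrow> (real \<Rightarrow> real) \<Rightarrow> real \<Rightarrow> real \<Rightarrow> real" where
  "geo_w f0 f1 u y = (if u = 0 then f0 y else if u = 1 then f1 y
                      else f1 y powr u * f0 y powr (1 - u))"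

definition geo_k :: "(real \<Rightarrow> real) \<Rightarrow> (real \<Rightarrow> real) \<Rightarrow> real \<Rightarrow> real" where
  "geo_k f0 f1 u = (\<integral>y. geo_w f0 f1 u y \<partial>lborel)"

definition geo_g :: "(real \<Rightarrow> real) \<Rightarrow> (real \<Rightarrow> real) \<Rightarrow> real \<Rightarrow> real \<Rightarrow> real" where
  "geo_g f0 f1 u y = geo_w f0 f1 u y / geo_k f0 f1 u"

text \<open>Where both are positive it is
  the logarithm of the ratio; where one of the nominal densities vanishes we use the
  standard conventions ln(a/0) = \<infinity>, ln(0/b) = -\<infinity> for the ratio
  (f1/f0)^(1-u-v) underlying gbar1/gbar0; on {f0 = 0 = f1} (a null set for every
  density in either ball) the value is 0.\<close>
definition llr :: "(real \<Rightarrow> real) \<Rightarrow> (real \<Rightarrow> real) \<Rightarrow> real \<Rightarrow> real \<Rightarrow> real \<Rightarrow> ereal" where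
  "llr f0 f1 u v y =
     (if 0 < geo_g f0 f1 u y \<and> 0 < geo_g f0 f1 (1 - v) y
      then ereal (ln (geo_g f0 f1 (1 - v) y / geo_g f0 f1 u y))
      else if f0 y = 0 \<and> 0 < f1 y then \<infinity>
      else if f1 y = 0 \<and> 0 < f0 y then - \<infinity>
      else 0)"

definition exp_pos :: "(real \<Rightarrow> real) \<Rightarrow> (real \<Rightarrow> ereal) \<Rightarrow> ennreal" where
  "exp_pos g h = (\<integral>\<^sup>+y. ennreal (g y) * e2ennreal (max (h y) 0) \<partial>lborel)"

definition exp_neg :: "(real \<Rightarrow> real) \<Rightarrow> (real \<Rightarrow> ereal) \<Rightarrow> ennreal" where
  "exp_neg g h = (\<integral>\<^sup>+y. ennreal (g y) * e2ennreal (max (- h y) 0) \<partial>lborel)"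

definition exp_defined :: "(real \<Rightarrow> real) \<Rightarrow> (real \<Rightarrow> ereal) \<Rightarrow> bool" where
  "exp_defined g h \<longleftrightarrow> \<not> (exp_pos g h = \<infinity> \<and> exp_neg g h = \<infinity>)"

definition expect :: "(real \<Rightarrow> real) \<Rightarrow> (real \<Rightarrow> ereal) \<Rightarrow> ereal" where
  "expect g h = enn2ereal (exp_pos g h) - enn2ereal (exp_neg g h)"

end

theory Submission
  imports Defs
begin


lemma pt_ineq:
  fixes g s r :: real and x :: ereal
  assumes "0 \<le> g" "0 \<le> s" "ereal g * x + ereal s \<le> ereal r"
  shows "ennreal g * e2ennreal (max x 0) + ennreal s + ennreal (- r)
         \<le> ennreal r + ennreal g * e2ennreal (max (- x) 0)"
proof (cases "g = 0")
  case True
  then have "s \<le> r" using assms by (simp add: zero_ereal_def[symmetric])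
  then show ?thesis using True assms
    by (cases "r \<ge> 0") (auto simp: ennreal_neg ennreal_plus[symmetric] simp del: ennreal_plus)
next
  case False
  then have gp: "0 < g" using assms by simp
  show ?thesis
  proof (cases x)
    case (real t)
    have e: "t * g + s \<le> r" using assms real by (simp add: mult.commute)
    have L: "ennreal g * e2ennreal (max x 0) = ennreal (g * max t 0)"
      using real gp by (simp add: max_def ennreal_mult e2ennreal_neg)
    have R: "ennreal g * e2ennreal (max (-x) 0) = ennreal (g * max (-t) 0)"
      using real gp by (simp add: max_def ennreal_mult e2ennreal_neg)
    have "ennreal (g * max t 0) + ennreal s + ennreal (- r) = ennreal (g * max t 0 + s + max (-r) 0)"
      using gp assms by (simp add: ennreal_plus[symmetric] max_def ennreal_neg del: ennreal_plus)
    also have "\<dots> \<le> ennreal (max r 0 + g * max (-t) 0)"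
      apply (rule ennreal_leI) using e gp
      by (auto simp: max_def algebra_simps)
    also have "\<dots> = ennreal r + ennreal (g * max (-t) 0)"
      using gp by (cases "r \<ge> 0") (auto simp: ennreal_plus[symmetric] max_def ennreal_neg simp del: ennreal_plus)
    finally show ?thesis using L R by simp
  next
    case PInf
    then show ?thesis using assms gp by simp
  next
    case MInf
    then show ?thesis using gp by (simp add: ennreal_mult_top)
  qed
qed

lemma key_ineq:
  fixes g S R :: "real \<Rightarrow> real" and h :: "real \<Rightarrow> ereal"
  assumes gm[measurable]: "g \<in> borel_measurable lborel" and hm[measurable]: "h \<in> borel_measurable lborel"
   and Sm[measurable]: "S \<in> borel_measurable lborel" and Rint: "integrable lborel R"
   and g0: "\<And>y. 0 \<le> g y" and S0: "\<And>y. 0 \<le> S y"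
   and le: "AE y in lborel. ereal (g y) * h y + ereal (S y) \<le> ereal (R y)"
  shows "exp_pos g h + (\<integral>\<^sup>+y. ennreal (S y) \<partial>lborel) + (\<integral>\<^sup>+y. ennreal (- R y) \<partial>lborel)
     \<le> (\<integral>\<^sup>+y. ennreal (R y) \<partial>lborel) + exp_neg g h"
proof -
  have Rm[measurable]: "R \<in> borel_measurable lborel" using Rint by auto
  have "exp_pos g h + (\<integral>\<^sup>+y. ennreal (S y) \<partial>lborel) + (\<integral>\<^sup>+y. ennreal (- R y) \<partial>lborel)
     = (\<integral>\<^sup>+y. ennreal (g y) * e2ennreal (max (h y) 0) + ennreal (S y) + ennreal (- R y) \<partial>lborel)"
    unfolding exp_pos_def by (simp add: nn_integral_add)
  also have "\<dots> \<le> (\<integral>\<^sup>+y. ennreal (R y) + ennreal (g y) * e2ennreal (max (- h y) 0) \<partial>lborel)"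
    apply (rule nn_integral_mono_AE)
    using le by eventually_elim (rule pt_ineq[OF g0 S0])
  also have "\<dots> = (\<integral>\<^sup>+y. ennreal (R y) \<partial>lborel) + exp_neg g h"
    unfolding exp_neg_def by (simp add: nn_integral_add)
  finally show ?thesis .
qed

lemma pt_ineq2:
  fixes g s r :: real and x :: ereal
  assumes "0 \<le> g" "0 \<le> s" "ereal g * x + ereal s \<le> ereal r"
  shows "ennreal g * e2ennreal (max x 0) \<le> ennreal r"
proof (cases "g = 0")
  case True then show ?thesis by simp
next
  case False
  then have gp: "0 < g" using assms by simp
  show ?thesis
  proof (cases x)
    case (real t)
    have e: "t * g + s \<le> r" using assms real by (simp add: mult.commute)
    have L: "ennreal g * e2ennreal (max x 0) = ennreal (g * max t 0)"
      using real gp by (simp add: max_def ennreal_mult e2ennreal_neg)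
    show ?thesis
    proof (cases "t \<le> 0")
      case True then show ?thesis unfolding L by simp
    next
      case False
      then show ?thesis unfolding L using e gp assms
        by (intro ennreal_leI) (auto simp: max_def algebra_simps)
    qed
  next
    case PInf
    then show ?thesis using assms gp by simp
  next
    case MInf
    then show ?thesis using gp by (simp add: e2ennreal_neg)
  qed
qed

lemma key_pos:
  fixes g S R :: "real \<Rightarrow> real" and h :: "real \<Rightarrow> ereal"
  assumes gm[measurable]: "g \<in> borel_measurable lborel" and hm[measurable]: "h \<in> borel_measurable lborel"
   and Rint: "integrable lborel R"
   and g0: "\<And>y. 0 \<le> g y" and S0: "\<And>y. 0 \<le> S y"
   and le: "AE y in lborel. ereal (g y) * h y + ereal (S y) \<le> ereal (R y)"
  shows "exp_pos g h \<le> (\<integral>\<^sup>+y. ennreal (R y) \<partial>lborel)"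
  unfolding exp_pos_def
  apply (rule nn_integral_mono_AE)
  using le by eventually_elim (rule pt_ineq2[OF g0 S0])

lemma ennreal_arith:
  fixes P N Sn Rp Rm :: ennreal
  assumes "P + Sn + Rm \<le> Rp + N" "Rp \<noteq> top" "Rm \<noteq> top" "P \<noteq> top"
  shows "enn2ereal P - enn2ereal N \<le> ereal (enn2real Rp - enn2real Rm)"
    and "N \<noteq> top \<Longrightarrow> enn2ereal P - enn2ereal N + enn2ereal Sn \<le> ereal (enn2real Rp - enn2real Rm)"
proof -
  obtain rp where rp: "Rp = ennreal rp" "0 \<le> rp" using assms(2) by (cases Rp) auto
  obtain rm where rm: "Rm = ennreal rm" "0 \<le> rm" using assms(3) by (cases Rm) auto
  obtain p where p: "P = ennreal p" "0 \<le> p" using assms(4) by (cases P) auto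
  show "N \<noteq> top \<Longrightarrow> enn2ereal P - enn2ereal N + enn2ereal Sn \<le> ereal (enn2real Rp - enn2real Rm)"
  proof -
    assume "N \<noteq> top"
    then obtain n where n: "N = ennreal n" "0 \<le> n" by (cases N) auto
    have "Sn \<noteq> top" using assms(1) rp n p by (auto simp: top_unique ennreal_plus[symmetric] simp del: ennreal_plus)
    then obtain sn where sn: "Sn = ennreal sn" "0 \<le> sn" by (cases Sn) auto
    have "p + sn + rm \<le> rp + n" using assms(1) rp n p sn rm
      by (simp add: ennreal_plus[symmetric] del: ennreal_plus)
    then show ?thesis using rp n p sn rm by simp
  qed
  show "enn2ereal P - enn2ereal N \<le> ereal (enn2real Rp - enn2real Rm)"
  proof (cases "N = top")
    case True then show ?thesis using p by simp
  next
    case False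
    then obtain n where n: "N = ennreal n" "0 \<le> n" by (cases N) auto
    have "Sn \<noteq> top" using assms(1) rp n p by (auto simp: top_unique ennreal_plus[symmetric] simp del: ennreal_plus)
    then obtain sn where sn: "Sn = ennreal sn" "0 \<le> sn" by (cases Sn) auto
    have "p + sn + rm \<le> rp + n" using assms(1) rp n p sn rm
      by (simp add: ennreal_plus[symmetric] del: ennreal_plus)
    then show ?thesis using rp n p sn rm by simp
  qed
qed

lemma key_main:
  fixes g S R :: "real \<Rightarrow> real" and h :: "real \<Rightarrow> ereal"
  assumes gm[measurable]: "g \<in> borel_measurable lborel" and hm[measurable]: "h \<in> borel_measurable lborel"
   and Sm[measurable]: "S \<in> borel_measurable lborel" and Rint: "integrable lborel R"
   and g0: "\<And>y. 0 \<le> g y" and S0: "\<And>y. 0 \<le> S y"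
   and le: "AE y in lborel. ereal (g y) * h y + ereal (S y) \<le> ereal (R y)"
  shows "exp_defined g h" "expect g h \<le> ereal (\<integral>y. R y \<partial>lborel)"
    "exp_neg g h \<noteq> top \<Longrightarrow> expect g h + enn2ereal (\<integral>\<^sup>+y. ennreal (S y) \<partial>lborel) \<le> ereal (\<integral>y. R y \<partial>lborel)"
proof -
  have Rp: "(\<integral>\<^sup>+y. ennreal (R y) \<partial>lborel) \<noteq> top" and Rm: "(\<integral>\<^sup>+y. ennreal (- R y) \<partial>lborel) \<noteq> top"
    using Rint unfolding real_integrable_def by (auto simp: top_unique less_top)
  have I: "(\<integral>y. R y \<partial>lborel) = enn2real (\<integral>\<^sup>+y. ennreal (R y) \<partial>lborel) - enn2real (\<integral>\<^sup>+y. ennreal (- R y) \<partial>lborel)"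
    by (rule real_lebesgue_integral_def[OF Rint])
  have P: "exp_pos g h \<noteq> top"
    using key_pos[OF gm hm Rint g0 S0 le] Rp by (auto simp: top_unique)
  note K = key_ineq[OF gm hm Sm Rint g0 S0 le]
  show "exp_defined g h" using P unfolding exp_defined_def by auto
  show "expect g h \<le> ereal (\<integral>y. R y \<partial>lborel)"
    unfolding expect_def I by (rule ennreal_arith(1)[OF K Rp Rm P])
  show "exp_neg g h \<noteq> top \<Longrightarrow> expect g h + enn2ereal (\<integral>\<^sup>+y. ennreal (S y) \<partial>lborel) \<le> ereal (\<integral>y. R y \<partial>lborel)"
    unfolding expect_def I by (rule ennreal_arith(2)[OF K Rp Rm P])
qed

lemma exp_neg_uminus: "exp_pos g (\<lambda>y. - h y) = exp_neg g h" "exp_neg g (\<lambda>y. - h y) = exp_pos g h"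
  unfolding exp_pos_def exp_neg_def by simp_all

lemma exp_defined_uminus: "exp_defined g (\<lambda>y. - h y) \<longleftrightarrow> exp_defined g h"
  unfolding exp_defined_def exp_neg_uminus by auto

lemma expect_uminus: "exp_defined g h \<Longrightarrow> expect g (\<lambda>y. - h y) = - expect g h"
  unfolding expect_def exp_neg_uminus exp_defined_def
  by (cases "exp_pos g h"; cases "exp_neg g h") auto

lemma key_eq:
  fixes g R :: "real \<Rightarrow> real" and h :: "real \<Rightarrow> ereal"
  assumes gm[measurable]: "g \<in> borel_measurable lborel" and hm[measurable]: "h \<in> borel_measurable lborel"
   and Rint: "integrable lborel R" and g0: "\<And>y. 0 \<le> g y"
   and eq: "AE y in lborel. ereal (g y) * h y = ereal (R y)"
  shows "exp_defined g h" "expect g h = ereal (\<integral>y. R y \<partial>lborel)"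
proof -
  have z: "\<And>y. (0::real) \<le> 0" by simp
  have A: "AE y in lborel. ereal (g y) * h y + ereal 0 \<le> ereal (R y)" using eq by auto
  have B: "AE y in lborel. ereal (g y) * (- h y) + ereal 0 \<le> ereal (- R y)" using eq by auto
  note K1 = key_main[OF gm hm _ Rint g0 z A, simplified]
  note K2 = key_main[of g "\<lambda>y. - h y" "\<lambda>_. 0" "\<lambda>y. - R y", OF gm _ _ _ g0 z B, simplified]
  show "exp_defined g h" by (rule K1(1))
  have "expect g (\<lambda>y. - h y) = - expect g h" by (rule expect_uminus[OF K1(1)])
  then have "- expect g h \<le> - ereal (\<integral>y. R y \<partial>lborel)" using K2 Rint by simp
  then show "expect g h = ereal (\<integral>y. R y \<partial>lborel)" using K1(2) by (metis antisym ereal_minus_le_minus ereal_uminus_uminus uminus_ereal.simps(1))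
qed



lemma expect_cong_AE:
  assumes "AE y in lborel. g y = g' y"
  shows "exp_pos g h = exp_pos g' h" "exp_neg g h = exp_neg g' h"
    "expect g h = expect g' h" "exp_defined g h = exp_defined g' h"
proof -
  show 1: "exp_pos g h = exp_pos g' h" unfolding exp_pos_def
    by (rule nn_integral_cong_AE) (use assms in auto)
  show 2: "exp_neg g h = exp_neg g' h" unfolding exp_neg_def
    by (rule nn_integral_cong_AE) (use assms in auto)
  show "expect g h = expect g' h" unfolding expect_def 1 2 ..
  show "exp_defined g h = exp_defined g' h" unfolding exp_defined_def 1 2 ..
qed

lemma geo_w_nonneg: "(\<And>y. 0 \<le> p y) \<Longrightarrow> (\<And>y. 0 \<le> q y) \<Longrightarrow> 0 \<le> geo_w p q t y"
  unfolding geo_w_def by auto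

lemma geo_w_meas[measurable]:
  assumes [measurable]: "p \<in> borel_measurable borel" "q \<in> borel_measurable borel"
  shows "geo_w p q t \<in> borel_measurable borel"
  unfolding geo_w_def[abs_def] by measurable

lemma geo_g_meas[measurable]:
  assumes [measurable]: "p \<in> borel_measurable borel" "q \<in> borel_measurable borel"
  shows "geo_g p q t \<in> borel_measurable borel"
  unfolding geo_g_def[abs_def] by measurable

lemma llr_meas[measurable]:
  assumes [measurable]: "p \<in> borel_measurable borel" "q \<in> borel_measurable borel"
  shows "llr p q u v \<in> borel_measurable borel"
  unfolding llr_def[abs_def] by measurable

lemma geo_w_pos:
  assumes "0 < p y" "0 < q y" "0 \<le> t" "t \<le> 1"
  shows "geo_w p q t y = q y powr t * p y powr (1 - t)" "0 < geo_w p q t y"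
    "ln (geo_w p q t y) = t * ln (q y) + (1 - t) * ln (p y)"
proof -
  show e: "geo_w p q t y = q y powr t * p y powr (1 - t)"
    using assms unfolding geo_w_def by auto
  show "0 < geo_w p q t y" unfolding e using assms by simp
  show "ln (geo_w p q t y) = t * ln (q y) + (1 - t) * ln (p y)"
    unfolding e using assms by (simp add: ln_mult ln_powr)
qed

lemma geo_w_q0: "0 < t \<Longrightarrow> q y = 0 \<Longrightarrow> geo_w p q t y = 0"
  unfolding geo_w_def by auto

lemma geo_w_p0: "t < 1 \<Longrightarrow> p y = 0 \<Longrightarrow> geo_w p q t y = 0"
  unfolding geo_w_def by auto

lemma geo_g_density:
  assumes p: "is_density p" and q: "is_density q" and k: "0 < geo_k p q t"
  shows "is_density (geo_g p q t)"
proof -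
  have pm[measurable]: "p \<in> borel_measurable borel" and qm[measurable]: "q \<in> borel_measurable borel"
    using p q unfolding is_density_def by auto
  have int: "integrable lborel (geo_w p q t)"
    using k unfolding geo_k_def using not_integrable_integral_eq by fastforce
  show ?thesis unfolding is_density_def
  proof (intro conjI allI)
    show "geo_g p q t \<in> borel_measurable lborel" by measurable
    show "0 \<le> geo_g p q t y" for y unfolding geo_g_def
      using geo_w_nonneg[of p q] p q k unfolding is_density_def by auto
    show "integrable lborel (geo_g p q t)" unfolding geo_g_def using int by simp
    show "(\<integral>y. geo_g p q t y \<partial>lborel) = 1" unfolding geo_g_def using k unfolding geo_k_def by simp
  qed
qed

lemma llr_pos:
  assumes u: "0 \<le> u" and v: "0 \<le> v" and uv: "u + v < 1"
    and k0: "0 < geo_k p q u" and k1: "0 < geo_k p q (1 - v)"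
    and py: "0 < p y" and qy: "0 < q y"
  shows "llr p q u v y = ereal ((1 - u - v) * (ln (q y) - ln (p y)) + (ln (geo_k p q u) - ln (geo_k p q (1 - v))))"
    "ln (geo_g p q u y) = u * ln (q y) + (1 - u) * ln (p y) - ln (geo_k p q u)"
    "0 < geo_g p q u y"
proof -
  have w0: "0 < geo_w p q u y" "ln (geo_w p q u y) = u * ln (q y) + (1 - u) * ln (p y)"
    using geo_w_pos[of p y q u, OF py qy] u uv v by auto
  have w1: "0 < geo_w p q (1-v) y" "ln (geo_w p q (1-v) y) = (1-v) * ln (q y) + (1 - (1-v)) * ln (p y)"
    using geo_w_pos[of p y q "1-v", OF py qy] u uv v by auto
  have g0: "0 < geo_g p q u y" "0 < geo_g p q (1-v) y" unfolding geo_g_def using w0 w1 k0 k1 by auto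
  show "0 < geo_g p q u y" by (rule g0(1))
  show l0: "ln (geo_g p q u y) = u * ln (q y) + (1 - u) * ln (p y) - ln (geo_k p q u)"
    unfolding geo_g_def using w0 k0 by (simp add: ln_div)
  have l1: "ln (geo_g p q (1-v) y) = (1-v) * ln (q y) + v * ln (p y) - ln (geo_k p q (1-v))"
    unfolding geo_g_def using w1 k1 by (simp add: ln_div)
  have "llr p q u v y = ereal (ln (geo_g p q (1 - v) y / geo_g p q u y))"
    unfolding llr_def using g0 by simp
  also have "ln (geo_g p q (1 - v) y / geo_g p q u y) = ln (geo_g p q (1 - v) y) - ln (geo_g p q u y)"
    using g0 by (simp add: ln_div)
  finally show "llr p q u v y = ereal ((1 - u - v) * (ln (q y) - ln (p y)) + (ln (geo_k p q u) - ln (geo_k p q (1 - v))))"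
    unfolding l0 l1 by (simp add: algebra_simps)
qed

lemma llr_q0:
  assumes v: "v < 1" and py: "0 < p y" and qy: "q y = 0"
  shows "llr p q u v y = - \<infinity>"
proof -
  have "geo_g p q (1 - v) y = 0" unfolding geo_g_def using geo_w_q0[of "1-v" q y p] v qy by simp
  then show ?thesis unfolding llr_def using py qy by simp
qed



lemma KL_le_D:
  assumes "KL g p \<le> ereal e"
  shows "AE y in lborel. p y = 0 \<longrightarrow> g y = 0" "integrable lborel (\<lambda>y. g y * ln (g y / p y))"
    "(\<integral>y. g y * ln (g y / p y) \<partial>lborel) \<le> e"
  using assms unfolding KL_def by (auto split: if_splits)

lemma KL_eq_D:
  assumes "KL g p = ereal e"
  shows "AE y in lborel. p y = 0 \<longrightarrow> g y = 0" "integrable lborel (\<lambda>y. g y * ln (g y / p y))"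
    "(\<integral>y. g y * ln (g y / p y) \<partial>lborel) = e"
  using assms unfolding KL_def by (auto split: if_splits)

lemma core_pos:
  fixes p q :: "real \<Rightarrow> real" and u v eps0 :: real
  assumes p: "is_density p" and q: "is_density q"
    and u: "0 < u" and v: "0 \<le> v" and uv: "u + v < 1"
    and k0: "0 < geo_k p q u" and k1: "0 < geo_k p q (1 - v)"
    and D0: "KL (geo_g p q u) p = ereal eps0"
  shows
    "geo_g p q u \<in> KL_ball p eps0
     \<and> exp_defined (geo_g p q u) (llr p q u v)
     \<and> (\<forall>g0 \<in> KL_ball p eps0. exp_defined g0 (llr p q u v) \<longrightarrow>
          expect g0 (llr p q u v) \<le> expect (geo_g p q u) (llr p q u v))
     \<and> (\<forall>g0 \<in> KL_ball p eps0. exp_defined g0 (llr p q u v) \<and>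
          expect g0 (llr p q u v) = expect (geo_g p q u) (llr p q u v) \<longrightarrow>
          (AE y in lborel. g0 y = geo_g p q u y))"
proof -
  have pm[measurable]: "p \<in> borel_measurable borel" and qm[measurable]: "q \<in> borel_measurable borel"
    using p q unfolding is_density_def by auto
  have p0: "\<And>y. 0 \<le> p y" and q0: "\<And>y. 0 \<le> q y" using p q unfolding is_density_def by auto
  define G where "G = geo_g p q u"
  define h where "h = llr p q u v"
  define a where "a = 1 - u - v"
  define A where "A = a / u"
  define K where "K = ln (geo_k p q u)"
  define c where "c = ln (geo_k p q u) - ln (geo_k p q (1 - v))"
  have Gm[measurable]: "G \<in> borel_measurable borel" unfolding G_def by measurable
  have hm[measurable]: "h \<in> borel_measurable borel" unfolding h_def by measurable
  have Gd: "is_density G" unfolding G_def by (rule geo_g_density[OF p q k0])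
  then have G0: "\<And>y. 0 \<le> G y" and Gint: "integrable lborel G" and GI: "(\<integral>y. G y \<partial>lborel) = 1"
    unfolding is_density_def by auto
  have ap: "0 < a" using uv unfolding a_def by simp
  have Ap: "0 < A" unfolding A_def using ap u by simp
  have Au: "A * u = a" unfolding A_def using u by simp
  have Gpos: "0 < p y \<and> 0 < q y" if "0 < G y" for y
  proof (rule ccontr)
    assume "\<not> (0 < p y \<and> 0 < q y)"
    then have "p y = 0 \<or> q y = 0" using p0[of y] q0[of y] by auto
    then have "geo_w p q u y = 0" using geo_w_p0[of u p y q] geo_w_q0[of u q y p] u uv v by auto
    then show False using that unfolding G_def geo_g_def by simp
  qed
  have hpos: "h y = ereal (a * (ln (q y) - ln (p y)) + c)" and lnG: "ln (G y) = u * ln (q y) + (1 - u) * ln (p y) - K"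
    and Gp: "0 < G y"
    if "0 < p y" "0 < q y" for y
    using llr_pos[OF _ v uv k0 k1 that] u unfolding h_def a_def c_def G_def K_def by auto
  have hq0: "h y = - \<infinity>" if "0 < p y" "q y = 0" for y
    unfolding h_def using llr_q0[of v p y q u] that uv u by simp
  define Rf where "Rf g y = A * (g y * ln (g y / p y)) + A * G y - A * g y + (A * K + c) * g y" for g :: "real \<Rightarrow> real" and y
  define Sf where "Sf g y = A * (if g y = 0 then G y else if G y = 0 then g y else G y - g y + g y * ln (g y / G y))"
    for g :: "real \<Rightarrow> real" and y
  have Sf_nonneg: "0 \<le> Sf g y" if "0 \<le> g y" for g y
  proof -
    have "0 \<le> G y - g y + g y * ln (g y / G y)" if "0 < g y" "0 < G y"
    proof -
      have "ln (G y / g y) \<le> G y / g y - 1" using that by (intro ln_le_minus_one) simp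
      then have "g y * ln (G y / g y) \<le> g y * (G y / g y - 1)" using that by (simp add: mult_left_mono)
      then have "g y * ln (G y / g y) \<le> G y - g y" using that by (simp add: algebra_simps)
      moreover have "ln (g y / G y) = - ln (G y / g y)" using that by (simp add: ln_div)
      ultimately show ?thesis by simp
    qed
    then show ?thesis unfolding Sf_def using that G0[of y] Ap by auto
  qed
  have Sf_zero: "g y = G y" if gg0: "0 \<le> g y" and sz: "Sf g y = 0" for g y
  proof -
    have that: "0 \<le> g y" "Sf g y = 0" using gg0 sz by auto
    consider "g y = 0" | "0 < g y" "G y = 0" | "0 < g y" "0 < G y" using gg0 G0[of y] by force
    then show ?thesis
    proof cases
      case 1 then show ?thesis using that Ap unfolding Sf_def by simp
    next
      case 2 then show ?thesis using that Ap unfolding Sf_def by simp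
    next
      case 3
      then have e: "G y - g y + g y * ln (g y / G y) = 0" using that Ap unfolding Sf_def by simp
      have "ln (g y / G y) = - ln (G y / g y)" using 3 by (simp add: ln_div)
      with e have "g y * ln (G y / g y) = g y * (G y / g y - 1)" using 3 by (simp add: algebra_simps)
      then have "ln (G y / g y) = G y / g y - 1" using 3 by simp
      then have "G y / g y = 1" using 3 by (intro ln_eq_minus_one) auto
      then show ?thesis using 3 by simp
    qed
  qed
  have pteq: "ereal (g y) * h y + ereal (Sf g y) = ereal (Rf g y)"
    if g0: "0 \<le> g y" and gp: "p y = 0 \<longrightarrow> g y = 0" and gq: "g y = 0 \<or> 0 < q y" for g y
  proof (cases "g y = 0")
    case True then show ?thesis unfolding Sf_def Rf_def by (simp add: zero_ereal_def[symmetric])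
  next
    case False
    then have gy: "0 < g y" using g0 by simp
    have py: "0 < p y" using gp False p0[of y] by force
    have qy: "0 < q y" using gq False by simp
    note hh = hpos[OF py qy] lnG[OF py qy] Gp[OF py qy]
    have "ereal (g y) * h y + ereal (Sf g y) = ereal (g y * (a * (ln (q y) - ln (p y)) + c) + A * (G y - g y + g y * (ln (g y) - ln (G y))))"
      unfolding hh(1) Sf_def using gy hh(3) by (simp add: ln_div)
    also have "\<dots> = ereal (Rf g y)"
      unfolding Rf_def hh(2) using gy py by (simp add: ln_div algebra_simps Au[symmetric])
    finally show ?thesis .
  qed
  have pt: "ereal (g y) * h y + ereal (Sf g y) \<le> ereal (Rf g y)"
    if g0: "0 \<le> g y" and gp: "p y = 0 \<longrightarrow> g y = 0" for g y
  proof (cases "g y = 0 \<or> 0 < q y")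
    case True then show ?thesis using pteq[of g y, OF g0 gp True] by simp
  next
    case False
    then have "0 < g y" "q y = 0" using g0 q0[of y] by force+
    moreover have "0 < p y" using gp \<open>0 < g y\<close> p0[of y] by force
    ultimately show ?thesis using hq0 by simp
  qed
  have Sf_m: "Sf g \<in> borel_measurable borel" if gm[measurable]: "g \<in> borel_measurable borel" for g
    unfolding Sf_def[abs_def] by measurable
  have Rf_I: "integrable lborel (Rf g) \<and> (\<integral>y. Rf g y \<partial>lborel) = A * (\<integral>y. g y * ln (g y / p y) \<partial>lborel) + A * K + c"
    if gd: "is_density g" and Li: "integrable lborel (\<lambda>y. g y * ln (g y / p y))" for g
  proof -
    have gi: "integrable lborel g" and gI: "(\<integral>y. g y \<partial>lborel) = 1" using gd unfolding is_density_def by auto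
    have i1: "integrable lborel (\<lambda>y. A * (g y * ln (g y / p y)))" using Li by simp
    have i2: "integrable lborel (\<lambda>y. A * G y)" using Gint by simp
    have i3: "integrable lborel (\<lambda>y. A * g y)" using gi by simp
    have i4: "integrable lborel (\<lambda>y. (A * K + c) * g y)" using gi by simp
    have "integrable lborel (Rf g)" unfolding Rf_def[abs_def] using i1 i2 i3 i4 by simp
    moreover have "(\<integral>y. Rf g y \<partial>lborel) = A * (\<integral>y. g y * ln (g y / p y) \<partial>lborel) + A * 1 - A * 1 + (A * K + c) * 1"
      unfolding Rf_def[abs_def] using i1 i2 i3 i4 gi Gint Li
      by (simp add: integral_add integral_diff GI gI)
    ultimately show ?thesis by simp
  qed
  note DG = KL_eq_D[OF D0[folded G_def]]
  have RG: "integrable lborel (Rf G)" "(\<integral>y. Rf G y \<partial>lborel) = A * eps0 + A * K + c"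
    using Rf_I[OF Gd DG(2)] DG(3) by auto
  have SG0: "Sf G y = 0" for y unfolding Sf_def by simp
  have eqG: "AE y in lborel. ereal (G y) * h y = ereal (Rf G y)"
  proof (rule AE_I2)
    fix y
    have a1: "p y = 0 \<longrightarrow> G y = 0" and a2: "G y = 0 \<or> 0 < q y" using Gpos[of y] G0[of y] by force+
    show "ereal (G y) * h y = ereal (Rf G y)" using pteq[of G y, OF G0 a1 a2] SG0[of y] by simp
  qed
  have Gml: "G \<in> borel_measurable lborel" and hml: "h \<in> borel_measurable lborel" by auto
  note KG = key_eq[OF Gml hml RG(1) G0 eqG]
  have EG: "expect G h = ereal (A * eps0 + A * K + c)" using KG(2) RG(2) by simp
  have GB: "G \<in> KL_ball p eps0" unfolding KL_ball_def using Gd D0[folded G_def] by simp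
  have comp: "expect g h \<le> expect G h \<and> (expect g h = expect G h \<longrightarrow> (AE y in lborel. g y = G y))"
    if gB: "g \<in> KL_ball p eps0" and gdef: "exp_defined g h" for g
  proof -
    have gd: "is_density g" and gK: "KL g p \<le> ereal eps0" using gB unfolding KL_ball_def by auto
    have gm[measurable]: "g \<in> borel_measurable borel" and g0: "\<And>y. 0 \<le> g y" using gd unfolding is_density_def by auto
    note Dg = KL_le_D[OF gK]
    note Rg = Rf_I[OF gd Dg(2)]
    have Rgle: "(\<integral>y. Rf g y \<partial>lborel) \<le> A * eps0 + A * K + c"
      using Rg Dg(3) Ap by (simp add: mult_left_mono)
    have le: "AE y in lborel. ereal (g y) * h y + ereal (Sf g y) \<le> ereal (Rf g y)"
      using Dg(1) by eventually_elim (rule pt[of g, OF g0])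
    have S0: "\<And>y. 0 \<le> Sf g y" using Sf_nonneg g0 by blast
    have gml: "g \<in> borel_measurable lborel" and hml: "h \<in> borel_measurable lborel"
      and Sml: "Sf g \<in> borel_measurable lborel" using Sf_m[OF gm] by auto
    note Kg = key_main[OF gml hml Sml conjunct1[OF Rg] g0 S0 le]
    have "expect g h \<le> expect G h" using Kg(2) Rgle EG by (simp add: order_trans)
    moreover have "AE y in lborel. g y = G y" if eq: "expect g h = expect G h"
    proof -
      have Nf: "exp_neg g h \<noteq> top"
      proof
        assume N: "exp_neg g h = top"
        then have "exp_pos g h \<noteq> top" using gdef unfolding exp_defined_def by auto
        then have "expect g h = - \<infinity>" unfolding expect_def using N by (cases "exp_pos g h") auto
        then show False using eq EG by simp
      qed
      define E where "E = A * eps0 + A * K + c"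
      define Y where "Y = (\<integral>\<^sup>+y. ennreal (Sf g y) \<partial>lborel)"
      have "expect g h + enn2ereal Y \<le> ereal (\<integral>y. Rf g y \<partial>lborel)" using Kg(3)[OF Nf] unfolding Y_def .
      also have "\<dots> \<le> ereal E" using Rgle unfolding E_def by simp
      finally have YE: "ereal E + enn2ereal Y \<le> ereal E" unfolding eq EG E_def .
      have "Y = 0"
      proof (cases Y)
        case (real y)
        then have "E + y \<le> E" using YE by simp
        then show ?thesis using real by simp
      next
        case top
        then show ?thesis using YE by simp
      qed
      then have "(\<integral>\<^sup>+y. ennreal (Sf g y) \<partial>lborel) = 0" unfolding Y_def .
      then have "AE y in lborel. ennreal (Sf g y) = 0"
        using Sf_m[OF gm] by (subst (asm) nn_integral_0_iff_AE) auto
      then show ?thesis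
      proof eventually_elim
        fix y assume "ennreal (Sf g y) = 0"
        then have "Sf g y = 0" using S0[of y] by simp
        then show "g y = G y" using Sf_zero g0 by blast
      qed
    qed
    ultimately show ?thesis by blast
  qed
  show ?thesis
    unfolding G_def[symmetric] h_def[symmetric] using GB KG(1) comp by blast
qed



lemma gibbs:
  assumes gd: "is_density g" and pd: "is_density p" and K: "KL g p \<le> ereal 0"
  shows "AE y in lborel. g y = p y"
proof -
  note Dg = KL_le_D[OF K]
  have gi: "integrable lborel g" and gI: "(\<integral>y. g y \<partial>lborel) = 1" and g0: "\<And>y. 0 \<le> g y"
    using gd unfolding is_density_def by auto
  have pi: "integrable lborel p" and pI: "(\<integral>y. p y \<partial>lborel) = 1" and p0: "\<And>y. 0 \<le> p y"
    using pd unfolding is_density_def by auto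
  define D where "D y = g y * ln (g y / p y) - g y + p y" for y
  have Di: "integrable lborel D" unfolding D_def[abs_def] using Dg(2) gi pi by simp
  have DI: "(\<integral>y. D y \<partial>lborel) = (\<integral>y. g y * ln (g y / p y) \<partial>lborel) - 1 + 1"
    unfolding D_def[abs_def] using Dg(2) gi pi by (simp add: integral_add integral_diff gI pI)
  have pt: "0 \<le> D y \<and> (D y = 0 \<longrightarrow> g y = p y)" if "p y = 0 \<longrightarrow> g y = 0" for y
  proof -
    consider "p y = 0" | "0 < p y" "g y = 0" | "0 < p y" "0 < g y" using p0[of y] g0[of y] by force
    then show ?thesis
    proof cases
      case 1 then show ?thesis using that unfolding D_def by simp
    next
      case 2 then show ?thesis unfolding D_def by simp
    next
      case 3
      have l: "ln (p y / g y) \<le> p y / g y - 1" using 3 by (intro ln_le_minus_one) simp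
      have e: "ln (g y / p y) = - ln (p y / g y)" using 3 by (simp add: ln_div)
      have "g y * ln (p y / g y) \<le> g y * (p y / g y - 1)" using l 3 by (simp add: mult_left_mono)
      then have "g y * ln (p y / g y) \<le> p y - g y" using 3 by (simp add: algebra_simps)
      then have A: "0 \<le> D y" unfolding D_def e by simp
      have "g y = p y" if "D y = 0"
      proof -
        have "g y * ln (p y / g y) = g y * (p y / g y - 1)" using that 3 unfolding D_def e by (simp add: algebra_simps)
        then have "ln (p y / g y) = p y / g y - 1" using 3 by simp
        then have "p y / g y = 1" using 3 by (intro ln_eq_minus_one) auto
        then show ?thesis using 3 by simp
      qed
      then show ?thesis using A by blast
    qed
  qed
  have AD: "AE y in lborel. 0 \<le> D y" using Dg(1) by eventually_elim (use pt in blast)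
  have "0 \<le> (\<integral>y. D y \<partial>lborel)" using AD by (rule integral_nonneg_AE)
  moreover have "(\<integral>y. D y \<partial>lborel) \<le> 0" using DI Dg(3) by simp
  ultimately have "(\<integral>y. D y \<partial>lborel) = 0" by simp
  then have "AE y in lborel. D y = 0" using integral_nonneg_eq_0_iff_AE[OF Di AD] by simp
  then show ?thesis using Dg(1) by eventually_elim (use pt in blast)
qed

lemma core_zero:
  fixes p q :: "real \<Rightarrow> real" and v eps0 :: real
  assumes p: "is_density p" and q: "is_density q"
    and v: "0 \<le> v" and uv: "v < 1"
    and k1: "0 < geo_k p q (1 - v)"
    and D0: "KL (geo_g p q 0) p = ereal eps0"
  shows
    "geo_g p q 0 \<in> KL_ball p eps0
     \<and> exp_defined (geo_g p q 0) (llr p q 0 v)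
     \<and> (\<forall>g0 \<in> KL_ball p eps0. exp_defined g0 (llr p q 0 v) \<longrightarrow>
          expect g0 (llr p q 0 v) \<le> expect (geo_g p q 0) (llr p q 0 v))
     \<and> (\<forall>g0 \<in> KL_ball p eps0. exp_defined g0 (llr p q 0 v) \<and>
          expect g0 (llr p q 0 v) = expect (geo_g p q 0) (llr p q 0 v) \<longrightarrow>
          (AE y in lborel. g0 y = geo_g p q 0 y))"
proof -
  have pm[measurable]: "p \<in> borel_measurable borel" and qm[measurable]: "q \<in> borel_measurable borel"
    using p q unfolding is_density_def by auto
  have p0: "\<And>y. 0 \<le> p y" and q0: "\<And>y. 0 \<le> q y" and pi: "integrable lborel p"
    and qi: "integrable lborel q" and pI: "(\<integral>y. p y \<partial>lborel) = 1"
    using p q unfolding is_density_def by auto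
  have w0: "geo_w p q 0 = p" unfolding geo_w_def by auto
  have k0v: "geo_k p q 0 = 1" unfolding geo_k_def w0 using pI by simp
  have k0: "0 < geo_k p q 0" using k0v by simp
  have G: "geo_g p q 0 = p" unfolding geo_g_def[abs_def] w0 k0v by simp
  have z: "(\<lambda>y. p y * ln (p y / p y)) = (\<lambda>y. 0)" by (rule ext, case_tac "p y = 0") auto
  have "KL p p = ereal 0" unfolding KL_def z by simp
  then have e0: "eps0 = 0" using D0 unfolding G by simp
  have GB: "p \<in> KL_ball p eps0" unfolding KL_ball_def using p D0 G by simp
  define h where "h = llr p q 0 v"
  have hm[measurable]: "h \<in> borel_measurable borel" unfolding h_def by measurable
  define c where "c = ln (geo_k p q 0) - ln (geo_k p q (1 - v))"
  define R where "R y = (1 - v) * (q y - p y) + c * p y" for y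
  have Ri: "integrable lborel R" unfolding R_def[abs_def] using pi qi by simp
  have le: "ereal (p y) * h y + ereal 0 \<le> ereal (R y)" for y
  proof -
    consider "p y = 0" | "0 < p y" "q y = 0" | "0 < p y" "0 < q y" using p0[of y] q0[of y] by force
    then show ?thesis
    proof cases
      case 1 then show ?thesis unfolding R_def using q0[of y] uv by (simp add: zero_ereal_def[symmetric])
    next
      case 2 then show ?thesis unfolding h_def using llr_q0[of v p y q 0] uv by simp
    next
      case 3
      have hh: "h y = ereal ((1 - 0 - v) * (ln (q y) - ln (p y)) + c)"
        unfolding h_def c_def by (rule llr_pos(1)[OF _ v _ k0 k1 3]) (use uv in auto)
      have l: "ln (q y / p y) \<le> q y / p y - 1" using 3 by (intro ln_le_minus_one) simp
      have "p y * ln (q y / p y) \<le> p y * (q y / p y - 1)" using l 3 by (simp add: mult_left_mono)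
      then have "p y * (ln (q y) - ln (p y)) \<le> q y - p y" using 3 by (simp add: algebra_simps ln_div)
      then have "(1 - v) * (p y * (ln (q y) - ln (p y))) \<le> (1 - v) * (q y - p y)"
        using uv by (intro mult_left_mono) auto
      then show ?thesis unfolding hh R_def by (simp add: algebra_simps)
    qed
  qed
  have pml: "p \<in> borel_measurable lborel" and hml: "h \<in> borel_measurable lborel"
    and zml: "(\<lambda>_. 0::real) \<in> borel_measurable lborel" by auto
  have Ed: "exp_defined p h"
    by (rule key_main(1)[OF pml hml zml Ri p0 _ AE_I2[OF le]]) simp
  have comp: "(AE y in lborel. g y = p y)" if "g \<in> KL_ball p eps0" for g
    using that unfolding KL_ball_def e0 using gibbs p by blast
  show ?thesis unfolding G h_def[symmetric]
    using GB Ed comp expect_cong_AE by (metis order_refl)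
qed



lemma core:
  fixes p q :: "real \<Rightarrow> real" and u v eps0 :: real
  assumes p: "is_density p" and q: "is_density q"
    and u: "0 \<le> u" and v: "0 \<le> v" and uv: "u + v < 1"
    and k0: "0 < geo_k p q u" and k1: "0 < geo_k p q (1 - v)"
    and D0: "KL (geo_g p q u) p = ereal eps0"
  shows
    "geo_g p q u \<in> KL_ball p eps0
     \<and> exp_defined (geo_g p q u) (llr p q u v)
     \<and> (\<forall>g0 \<in> KL_ball p eps0. exp_defined g0 (llr p q u v) \<longrightarrow>
          expect g0 (llr p q u v) \<le> expect (geo_g p q u) (llr p q u v))
     \<and> (\<forall>g0 \<in> KL_ball p eps0. exp_defined g0 (llr p q u v) \<and>
          expect g0 (llr p q u v) = expect (geo_g p q u) (llr p q u v) \<longrightarrow>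
          (AE y in lborel. g0 y = geo_g p q u y))"
proof (cases "u = 0")
  case True
  then show ?thesis using core_zero[OF p q v _ k1] D0 uv by simp
next
  case False
  then show ?thesis using core_pos[OF p q _ v uv k0 k1 D0] u by simp
qed

lemma geo_w_swap: "geo_w q p v = geo_w p q (1 - v)"
  unfolding geo_w_def by (rule ext) (simp add: mult.commute)

lemma geo_k_swap: "geo_k q p v = geo_k p q (1 - v)"
  unfolding geo_k_def by (subst geo_w_swap) (rule refl)

lemma geo_g_swap: "geo_g q p v = geo_g p q (1 - v)"
  unfolding geo_g_def[abs_def] by (subst geo_w_swap, subst geo_k_swap) (rule refl)

lemma llr_swap: "llr q p v u = (\<lambda>y. - llr p q u v y)"
proof (rule ext)
  fix y
  have a: "geo_g q p v = geo_g p q (1 - v)" and b: "geo_g q p (1 - u) = geo_g p q u"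
    using geo_g_swap[of q p v] geo_g_swap[of q p "1-u"] by simp_all
  show "llr q p v u y = - llr p q u v y"
  proof (cases "0 < geo_g p q u y \<and> 0 < geo_g p q (1 - v) y")
    case True
    then have l: "ln (geo_g p q u y / geo_g p q (1 - v) y) = - ln (geo_g p q (1 - v) y / geo_g p q u y)"
      by (simp add: ln_div)
    show ?thesis unfolding llr_def a b using True l by auto
  next
    case False
    then show ?thesis unfolding llr_def a b by auto
  qed
qed

theorem mainTheorem4:
  fixes f0 f1 :: "real \<Rightarrow> real" and u v eps0 eps1 :: real
  assumes f0: "is_density f0" and f1: "is_density f1"
    and u: "0 \<le> u" "u \<le> 1" and v: "0 \<le> v" "v \<le> 1" and uv: "u + v < 1"
    and k0: "0 < geo_k f0 f1 u" and k1: "0 < geo_k f0 f1 (1 - v)"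
    and D0: "KL (geo_g f0 f1 u) f0 = ereal eps0"
    and D1: "KL (geo_g f0 f1 (1 - v)) f1 = ereal eps1"
  shows
    "geo_g f0 f1 u \<in> KL_ball f0 eps0
     \<and> exp_defined (geo_g f0 f1 u) (llr f0 f1 u v)
     \<and> (\<forall>g0 \<in> KL_ball f0 eps0. exp_defined g0 (llr f0 f1 u v) \<longrightarrow>
          expect g0 (llr f0 f1 u v) \<le> expect (geo_g f0 f1 u) (llr f0 f1 u v))
     \<and> (\<forall>g0 \<in> KL_ball f0 eps0. exp_defined g0 (llr f0 f1 u v) \<and>
          expect g0 (llr f0 f1 u v) = expect (geo_g f0 f1 u) (llr f0 f1 u v) \<longrightarrow>
          (AE y in lborel. g0 y = geo_g f0 f1 u y))
     \<and> geo_g f0 f1 (1 - v) \<in> KL_ball f1 eps1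
     \<and> exp_defined (geo_g f0 f1 (1 - v)) (llr f0 f1 u v)
     \<and> (\<forall>g1 \<in> KL_ball f1 eps1. exp_defined g1 (llr f0 f1 u v) \<longrightarrow>
          expect (geo_g f0 f1 (1 - v)) (llr f0 f1 u v) \<le> expect g1 (llr f0 f1 u v))
     \<and> (\<forall>g1 \<in> KL_ball f1 eps1. exp_defined g1 (llr f0 f1 u v) \<and>
          expect g1 (llr f0 f1 u v) = expect (geo_g f0 f1 (1 - v)) (llr f0 f1 u v) \<longrightarrow>
          (AE y in lborel. g1 y = geo_g f0 f1 (1 - v) y))"
proof -
  note C0 = core[OF f0 f1 u(1) v(1) uv k0 k1 D0]
  define H where "H = geo_g f0 f1 (1 - v)"
  define h where "h = llr f0 f1 u v"
  have k0': "0 < geo_k f1 f0 v" using k1 geo_k_swap[of f1 f0 v] by simp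
  have k1': "0 < geo_k f1 f0 (1 - u)" using k0 geo_k_swap[of f1 f0 "1 - u"] by simp
  have D1': "KL (geo_g f1 f0 v) f1 = ereal eps1" using D1 geo_g_swap[of f1 f0 v] by simp
  have vu: "v + u < 1" using uv by simp
  note C1 = core[OF f1 f0 v(1) u(1) vu k0' k1' D1']
  have HH: "geo_g f1 f0 v = H" unfolding H_def by (rule geo_g_swap)
  have hh: "llr f1 f0 v u = (\<lambda>y. - h y)" unfolding h_def by (rule llr_swap)
  have C1': "H \<in> KL_ball f1 eps1 \<and> exp_defined H (\<lambda>y. - h y)
     \<and> (\<forall>g0 \<in> KL_ball f1 eps1. exp_defined g0 (\<lambda>y. - h y) \<longrightarrow>
          expect g0 (\<lambda>y. - h y) \<le> expect H (\<lambda>y. - h y))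
     \<and> (\<forall>g0 \<in> KL_ball f1 eps1. exp_defined g0 (\<lambda>y. - h y) \<and>
          expect g0 (\<lambda>y. - h y) = expect H (\<lambda>y. - h y) \<longrightarrow>
          (AE y in lborel. g0 y = H y))"
    using C1 unfolding HH hh .
  have EH: "exp_defined H h" using conjunct1[OF conjunct2[OF C1']] exp_defined_uminus by simp
  have P1: "expect H h \<le> expect g h" if "g \<in> KL_ball f1 eps1" "exp_defined g h" for g
  proof -
    have "exp_defined g (\<lambda>y. - h y)" using that(2) exp_defined_uminus by simp
    then have "expect g (\<lambda>y. - h y) \<le> expect H (\<lambda>y. - h y)" using conjunct1[OF conjunct2[OF conjunct2[OF C1']]] that(1) by blast
    then show ?thesis using expect_uminus[OF that(2)] expect_uminus[OF EH] by simp
  qed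
  have P2: "AE y in lborel. g y = H y" if "g \<in> KL_ball f1 eps1" "exp_defined g h" "expect g h = expect H h" for g
  proof -
    have "expect g (\<lambda>y. - h y) = expect H (\<lambda>y. - h y)"
      using expect_uminus[OF that(2)] expect_uminus[OF EH] that(3) by simp
    moreover have "exp_defined g (\<lambda>y. - h y)" using that(2) exp_defined_uminus by simp
    ultimately show ?thesis using conjunct2[OF conjunct2[OF conjunct2[OF C1']]] that(1) by blast
  qed
  have C0': "geo_g f0 f1 u \<in> KL_ball f0 eps0
     \<and> exp_defined (geo_g f0 f1 u) h
     \<and> (\<forall>g0 \<in> KL_ball f0 eps0. exp_defined g0 h \<longrightarrow>
          expect g0 h \<le> expect (geo_g f0 f1 u) h)
     \<and> (\<forall>g0 \<in> KL_ball f0 eps0. exp_defined g0 h \<and>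
          expect g0 h = expect (geo_g f0 f1 u) h \<longrightarrow>
          (AE y in lborel. g0 y = geo_g f0 f1 u y))" using C0 unfolding h_def .
  have HB: "H \<in> KL_ball f1 eps1" using C1' by (rule conjunct1)
  show ?thesis unfolding H_def[symmetric] h_def[symmetric]
  proof (intro conjI)
    show "geo_g f0 f1 u \<in> KL_ball f0 eps0" using C0' by (rule conjunct1)
    show "exp_defined (geo_g f0 f1 u) h" using C0' by (rule conjunct1[OF conjunct2])
    show "\<forall>g0 \<in> KL_ball f0 eps0. exp_defined g0 h \<longrightarrow> expect g0 h \<le> expect (geo_g f0 f1 u) h"
      using C0' by (rule conjunct1[OF conjunct2[OF conjunct2]])
    show "\<forall>g0 \<in> KL_ball f0 eps0. exp_defined g0 h \<and> expect g0 h = expect (geo_g f0 f1 u) h \<longrightarrow>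
          (AE y in lborel. g0 y = geo_g f0 f1 u y)" using C0' by (rule conjunct2[OF conjunct2[OF conjunct2]])
    show "H \<in> KL_ball f1 eps1" by (rule HB)
    show "exp_defined H h" by (rule EH)
    show "\<forall>g1\<in>KL_ball f1 eps1. exp_defined g1 h \<longrightarrow> expect H h \<le> expect g1 h" using P1 by blast
    show "\<forall>g1\<in>KL_ball f1 eps1. exp_defined g1 h \<and> expect g1 h = expect H h \<longrightarrow> (AE y in lborel. g1 y = H y)"
      using P2 by blast
  qed
qed

end
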